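(* For any $k, J \in \mathbb{N}$ with $2ek < J$, and for each choice of activation $\sigma \in \{\exp, \sinh, \sin\}$, there exists a shallow (one-hidden-layer) neural network $f^{(k)} : \mathbb{C} \to \mathbb{C}$ using activation $\sigma$, with $O(J)$ neurons and weights of size $O(k)$, such that $$\sup_{|\xi| \leq 2} \left| f^{(k)}(\xi) - \xi^k \right| \leq 2 \left( \frac{2ek}{J} \right)^J.$$
   Context: A shallow neural network with activation $\sigma$ here means a function of the form $\xi \mapsto \sum_{j} a_j \sigma(w_j \xi + b_j)$ with complex weights $a_j, w_j, b_j$; the number of neurons is the number of summands. *)

theory Defs
  imports "HOL-Analysis.Analysis"
begin

definition shallow_nn :: "(complex \<Rightarrow> complex) \<Rightarrow> (complex \<times> complex \<times> complex) list \<Rightarrow> complex \<Rightarrow> complex" where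
  "shallow_nn \<sigma> ps \<xi> = (\<Sum>(a, w, b)\<leftarrow>ps. a * \<sigma> (w * \<xi> + b))"

end

theory Submission
  imports Defs
begin


lemma omega_pow:
  fixes N d :: nat
  shows "exp (2 * of_real pi * \<i> / of_nat N) ^ d = exp (2 * of_real pi * \<i> * of_nat d / of_nat N)"
proof -
  have "exp (2 * of_real pi * \<i> / of_nat N) ^ d = exp (of_nat d * (2 * of_real pi * \<i> / of_nat N))"
    by (rule exp_of_nat_mult[symmetric])
  also have "\<dots> = exp (2 * of_real pi * \<i> * of_nat d / of_nat N)" by (simp add: field_simps)
  finally show ?thesis .
qed

lemma root_sum:
  fixes N d :: nat
  assumes "0 < N"
  shows "(\<Sum>j<N. (exp (2 * of_real pi * \<i> / of_nat N) ^ d) ^ j) = (if N dvd d then of_nat N else 0)"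
proof -
  let ?z = "exp (2 * of_real pi * \<i> / of_nat N) ^ d"
  have z: "?z = exp (2 * of_real pi * \<i> * of_nat d / of_nat N)" by (rule omega_pow)
  have iff: "?z = 1 \<longleftrightarrow> N dvd d" unfolding z using assms
    by (intro complex_root_unity_eq_1) simp
  have zN: "?z ^ N = 1"
  proof -
    have "?z ^ N = (exp (2 * of_real pi * \<i> / of_nat N) ^ N) ^ d"
      by (simp add: power_mult[symmetric] mult.commute)
    also have "exp (2 * of_real pi * \<i> / of_nat N) ^ N = exp (2 * of_real pi * \<i> * of_nat N / of_nat N)"
      by (rule omega_pow)
    also have "\<dots> = 1" using assms by simp
    finally show ?thesis by simp
  qed
  show ?thesis
  proof (cases "N dvd d")
    case True
    then have "?z = 1" using iff by simp
    then show ?thesis using True by simp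
  next
    case False
    then have "?z \<noteq> 1" using iff by simp
    then have "(\<Sum>j<N. ?z ^ j) = (?z ^ N - 1) / (?z - 1)" by (rule geometric_sum)
    then show ?thesis using zN False by simp
  qed
qed

lemma ratio_bound:
  fixes t :: real and N m :: nat
  assumes "0 \<le> t" "2 * t \<le> real N" "N \<le> m"
  shows "t ^ m / fact m \<le> t ^ N / fact N * (1/2) ^ (m - N)"
  using assms(3)
proof (induction m rule: dec_induct)
  case base
  then show ?case by simp
next
  case (step m)
  have "t ^ Suc m / fact (Suc m) = (t ^ m / fact m) * (t / real (Suc m))"
    by (simp add: field_simps)
  also have "\<dots> \<le> (t ^ N / fact N * (1/2) ^ (m - N)) * (1/2)"
  proof (rule mult_mono)
    show "t / real (Suc m) \<le> 1/2" using assms step(1) by (simp add: field_simps)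
  qed (use step assms in auto)
  also have "\<dots> = t ^ N / fact N * (1/2) ^ (Suc m - N)"
    using step(1) by (simp add: Suc_diff_le)
  finally show ?case .
qed

lemma exp_ge_term:
  fixes x :: real and n :: nat
  assumes "0 \<le> x"
  shows "x ^ n / fact n \<le> exp x"
proof -
  have s: "summable (\<lambda>n. x ^ n /\<^sub>R fact n)" using exp_converges sums_summable by blast
  have "sum (\<lambda>n. x ^ n /\<^sub>R fact n) {n} \<le> suminf (\<lambda>n. x ^ n /\<^sub>R fact n)"
    by (rule sum_le_suminf[OF s]) (use assms in auto)
  moreover have "exp x = suminf (\<lambda>n. x ^ n /\<^sub>R fact n)" using exp_converges[of x] by (rule sums_unique)
  ultimately show ?thesis by (simp add: divide_inverse_commute)
qed

lemma core:
  fixes k N :: nat and \<xi> :: complex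
  assumes N4: "4 * k \<le> N" and N0: "0 < N" and xi: "norm \<xi> \<le> 2"
  defines "\<omega> \<equiv> exp (2 * of_real pi * \<i> / of_nat N)"
  defines "c \<equiv> complex_of_real (fact k / (real k ^ k * real N))"
  shows "norm ((\<Sum>j<N. c * \<omega> ^ (j * (N - k)) * exp (of_nat k * \<omega> ^ j * \<xi>)) - \<xi> ^ k)
           \<le> 2 * ((2 * real k) ^ N / fact N)"
proof -
  have kN: "k < N" using N4 N0 by linarith
  define F where "F m = (if N dvd (m + N - k) then of_nat N * c * (of_nat k * \<xi>) ^ m / fact m else 0)" for m
  have trm: "(\<Sum>j<N. c * \<omega> ^ (j * (N - k)) * ((of_nat k * \<omega> ^ j * \<xi>) ^ m /\<^sub>R fact m)) = F m" for m
  proof -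
    have "c * \<omega> ^ (j * (N - k)) * ((of_nat k * \<omega> ^ j * \<xi>) ^ m /\<^sub>R fact m)
          = c * (of_nat k * \<xi>) ^ m / fact m * (\<omega> ^ (m + N - k)) ^ j" for j
    proof -
      have "\<omega> ^ (j * (N - k)) * (\<omega> ^ j) ^ m = (\<omega> ^ (m + N - k)) ^ j"
        using kN by (simp add: power_mult[symmetric] power_add[symmetric] algebra_simps)
      then show ?thesis
        by (simp add: scaleR_conv_of_real power_mult_distrib field_simps)
    qed
    then have "(\<Sum>j<N. c * \<omega> ^ (j * (N - k)) * ((of_nat k * \<omega> ^ j * \<xi>) ^ m /\<^sub>R fact m))
       = c * (of_nat k * \<xi>) ^ m / fact m * (\<Sum>j<N. (\<omega> ^ (m + N - k)) ^ j)"
      by (simp add: sum_distrib_left)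
    also have "(\<Sum>j<N. (\<omega> ^ (m + N - k)) ^ j) = (if N dvd (m + N - k) then of_nat N else 0)"
      unfolding \<omega>_def by (rule root_sum[OF N0])
    finally show ?thesis unfolding F_def by auto
  qed
  define S where "S = (\<Sum>j<N. c * \<omega> ^ (j * (N - k)) * exp (of_nat k * \<omega> ^ j * \<xi>))"
  have "(\<lambda>m. \<Sum>j<N. c * \<omega> ^ (j * (N - k)) * ((of_nat k * \<omega> ^ j * \<xi>) ^ m /\<^sub>R fact m)) sums S"
    unfolding S_def by (intro sums_sum sums_mult exp_converges)
  then have Fs: "F sums S" using trm by simp
  define g where "g m = F m - (if m = k then \<xi> ^ k else 0)" for m
  have gs: "g sums (S - \<xi> ^ k)" unfolding g_def
    by (intro sums_diff Fs) (rule sums_single)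
  define T where "T = (2 * real k) ^ N / fact N"
  define h where "h m = (if m < N then 0 else T * (1/2) ^ (m - N))" for m
  have "(\<lambda>i. h (i + N)) = (\<lambda>i. T * (1/2) ^ i)" unfolding h_def by auto
  moreover have "(\<lambda>i. T * (1/2::real) ^ i) sums (T * 2)"
    using sums_mult[OF geometric_sums[of "1/2::real"], of T] by simp
  ultimately have "(\<lambda>i. h (i + N)) sums (T * 2)" by simp
  then have hs: "h sums (T * 2 + sum h {..<N})" by (simp add: sums_iff_shift)
  have "sum h {..<N} = 0" unfolding h_def by simp
  with hs have hs2: "h sums (2 * T)" by (simp add: mult.commute)
  have kk: "real k ^ k \<noteq> 0" by (cases k) auto
  have Nc: "norm (of_nat N * c) \<le> 1"
  proof -
    have e1: "of_nat N * c = complex_of_real (real N * (fact k / (real k ^ k * real N)))"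
      unfolding c_def by simp
    have e2: "real N * (fact k / (real k ^ k * real N)) = fact k / real k ^ k" using N0 by simp
    have "norm (of_nat N * c) = fact k / real k ^ k"
      unfolding e1 e2 norm_of_real by simp
    moreover have fk: "fact k \<le> real k ^ k" using fact_le_power[where 'a=real and n=k] by simp
    moreover have "fact k / real k ^ k \<le> 1" using fk kk
      by (simp add: divide_le_eq_1)
    ultimately show ?thesis by simp
  qed
  have bound: "norm (g m) \<le> h m" for m
  proof (cases "m < N")
    case True
    have "g m = 0"
    proof (cases "m = k")
      case True
      have "of_nat N * c * (of_nat k * \<xi>) ^ k / fact k = \<xi> ^ k"
        unfolding c_def using N0 kk by (simp add: power_mult_distrib field_simps)
      then show ?thesis unfolding g_def F_def using True kN by simp
    next
      case False
      have "\<not> N dvd (m + N - k)"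
      proof
        assume "N dvd (m + N - k)"
        then obtain q where q: "m + N - k = N * q" by auto
        have "0 < m + N - k" "m + N - k < 2 * N" using kN \<open>m < N\<close> by auto
        then have a: "N * q < N * 2" and b: "0 < N * q" using q by (auto simp: mult.commute)
        from a N0 have "q < 2" by simp
        moreover from b have "q \<noteq> 0" by auto
        ultimately have "q = 1" by arith
        then show False using q False kN by auto
      qed
      then show ?thesis unfolding g_def F_def using False by simp
    qed
    then show ?thesis unfolding h_def using True by simp
  next
    case False
    then have mk: "m \<noteq> k" using kN by auto
    have "norm (g m) \<le> norm (of_nat N * c * (of_nat k * \<xi>) ^ m / fact m)"
      unfolding g_def F_def using mk by simp
    also have "\<dots> = norm (of_nat N * c) * (real k * norm \<xi>) ^ m / fact m"
      by (simp add: norm_mult norm_divide norm_power)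
    also have "\<dots> \<le> 1 * (2 * real k) ^ m / fact m"
    proof -
      have "(real k * norm \<xi>) ^ m \<le> (2 * real k) ^ m"
        using xi by (intro power_mono) (auto simp: mult.commute mult_left_mono)
      then show ?thesis using Nc
        by (intro divide_right_mono mult_mono) auto
    qed
    also have "\<dots> \<le> T * (1/2) ^ (m - N)"
      unfolding T_def using ratio_bound[of "2 * real k" N m] N4 False by simp
    finally show ?thesis unfolding h_def using False by simp
  qed
  have "norm (S - \<xi> ^ k) = norm (suminf g)" using gs sums_unique by metis
  also have "\<dots> \<le> suminf h" by (rule norm_suminf_le[OF bound sums_summable[OF hs2]])
  also have "\<dots> = 2 * T" using hs2 sums_unique by metis
  finally show ?thesis unfolding S_def T_def .
qed



lemma T_bound:
  fixes k J :: nat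
  assumes kJ: "2 * exp 1 * real k < real J"
  shows "(2 * real k) ^ (2 * J) / fact (2 * J) \<le> (2 * exp 1 * real k / real J) ^ J"
proof -
  have J0: "0 < real J" using kJ by (smt (verit) exp_gt_zero mult_nonneg_nonneg of_nat_0_le_iff)
  define N where "N = 2 * J"
  have N0: "0 < real N" using J0 unfolding N_def by simp
  have e: "real N ^ N / fact N \<le> exp (real N)" by (rule exp_ge_term) simp
  have en: "exp (real N) = exp 1 ^ N" using exp_of_nat_mult[of N "1::real"] by simp
  have "(2 * real k) ^ N / fact N = (2 * real k / real N) ^ N * (real N ^ N / fact N)"
    using N0 by (simp add: power_divide field_simps)
  also have "\<dots> \<le> (2 * real k / real N) ^ N * exp 1 ^ N"
    using e en by (intro mult_left_mono) auto
  also have "\<dots> = (2 * real k / real N * exp 1) ^ N" by (rule power_mult_distrib[symmetric])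
  also have "\<dots> = (exp 1 * real k / real J) ^ N"
  proof -
    have "2 * real k / real N * exp 1 = exp 1 * real k / real J"
      unfolding N_def using J0 by (simp add: field_simps)
    then show ?thesis by simp
  qed
  also have "\<dots> = ((exp 1 * real k / real J) ^ 2) ^ J"
    unfolding N_def by (simp add: power_mult[symmetric] mult.commute)
  also have "\<dots> \<le> (2 * exp 1 * real k / real J) ^ J"
  proof (rule power_mono)
    have a: "0 \<le> exp 1 * real k / real J" using J0 by simp
    have b: "exp 1 * real k / real J \<le> 2" using kJ J0 by (simp add: field_simps)
    have "(exp 1 * real k / real J) ^ 2 = (exp 1 * real k / real J) * (exp 1 * real k / real J)"
      by (simp add: power2_eq_square)
    also have "\<dots> \<le> 2 * (exp 1 * real k / real J)" using a b by (intro mult_right_mono) auto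
    finally show "(exp 1 * real k / real J) ^ 2 \<le> 2 * exp 1 * real k / real J" by simp
  qed simp
  finally show ?thesis unfolding N_def .
qed

lemma nn_concat:
  "shallow_nn \<sigma> (concat (map f xs)) \<xi> = (\<Sum>x\<leftarrow>xs. shallow_nn \<sigma> (f x) \<xi>)"
  by (induction xs) (auto simp: shallow_nn_def)

lemma nn_exp:
  "shallow_nn exp (concat (map (\<lambda>(a, w). [(a, w, 0)]) xs)) \<xi> = (\<Sum>(a, w)\<leftarrow>xs. a * exp (w * \<xi>))"
  unfolding nn_concat by (induction xs) (auto simp: shallow_nn_def)

lemma sinh_id: "sinh (z::complex) - \<i> * sinh (z + \<i> * of_real pi / 2) = exp z"
proof -
  have i: "exp (\<i> * of_real pi / 2) = \<i>"
    by (simp add: exp_eq_polar cis_conv_exp[symmetric] cis.ctr complex_eq_iff)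
  have i2: "exp (- (\<i> * of_real pi / 2)) = - \<i>"
    by (simp add: exp_minus i)
  have e1: "exp (z + \<i> * of_real pi / 2) = \<i> * exp z" by (simp add: exp_add i)
  have e2: "exp (- (z + \<i> * of_real pi / 2)) = - \<i> * exp (- z)"
    by (simp only: minus_add_distrib exp_add i2) simp
  have "sinh (z + \<i> * of_real pi / 2) = \<i> * cosh z"
    unfolding sinh_def cosh_def e1 e2 by (simp add: algebra_simps scaleR_conv_of_real)
  then have "sinh z - \<i> * sinh (z + \<i> * of_real pi / 2) = sinh z + cosh z" by simp
  then show ?thesis by (simp add: sinh_plus_cosh)
qed

lemma sin_id: "sin (- \<i> * (z::complex) + of_real pi / 2) + \<i> * sin (- \<i> * z) = exp z"
proof -
  have "sin (- \<i> * z + of_real pi / 2) = cos (- \<i> * z)"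
    by (subst sin_add) simp
  moreover have "exp (\<i> * (- \<i> * z)) = cos (- \<i> * z) + \<i> * sin (- \<i> * z)"
    by (rule exp_Euler)
  moreover have "\<i> * (- \<i> * z) = z" by simp
  ultimately show ?thesis by simp
qed

lemma nn_sinh:
  "shallow_nn sinh (concat (map (\<lambda>(a, w). [(a, w, 0), (- \<i> * a, w, \<i> * of_real pi / 2)]) xs)) \<xi>
     = (\<Sum>(a, w)\<leftarrow>xs. a * exp (w * \<xi>))"
proof -
  have "shallow_nn sinh [(a, w, 0), (- \<i> * a, w, \<i> * of_real pi / 2)] \<xi> = a * exp (w * \<xi>)" for a w
  proof -
    have "shallow_nn sinh [(a, w, 0), (- \<i> * a, w, \<i> * of_real pi / 2)] \<xi>
          = a * (sinh (w * \<xi>) - \<i> * sinh (w * \<xi> + \<i> * of_real pi / 2))"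
      by (simp add: shallow_nn_def algebra_simps)
    then show ?thesis by (simp only: sinh_id)
  qed
  then show ?thesis unfolding nn_concat by (simp add: case_prod_unfold)
qed

lemma nn_sin:
  "shallow_nn sin (concat (map (\<lambda>(a, w). [(a, - \<i> * w, of_real pi / 2), (\<i> * a, - \<i> * w, 0)]) xs)) \<xi>
     = (\<Sum>(a, w)\<leftarrow>xs. a * exp (w * \<xi>))"
proof -
  have "shallow_nn sin [(a, - \<i> * w, of_real pi / 2), (\<i> * a, - \<i> * w, 0)] \<xi> = a * exp (w * \<xi>)" for a w
  proof -
    have "shallow_nn sin [(a, - \<i> * w, of_real pi / 2), (\<i> * a, - \<i> * w, 0)] \<xi>
          = a * (sin (- \<i> * (w * \<xi>) + of_real pi / 2) + \<i> * sin (- \<i> * (w * \<xi>)))"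
      by (simp add: shallow_nn_def algebra_simps)
    then show ?thesis by (simp only: sin_id)
  qed
  then show ?thesis unfolding nn_concat by (simp add: case_prod_unfold)
qed



lemma approx:
  fixes k J :: nat
  assumes kJ: "2 * exp 1 * real k < real J"
  shows "\<exists>xs :: (complex \<times> complex) list. length xs = 2 * J \<and>
           (\<forall>(a, w) \<in> set xs. norm a \<le> 1 \<and> norm w \<le> real k) \<and>
           (\<forall>\<xi>::complex. norm \<xi> \<le> 2 \<longrightarrow>
              norm ((\<Sum>(a, w)\<leftarrow>xs. a * exp (w * \<xi>)) - \<xi> ^ k) \<le> 2 * (2 * exp 1 * real k / real J) ^ J)"
proof -
  have e2: "2 \<le> exp (1::real)" using exp_ge_add_one_self[of "1::real"] by simp
  have J0: "0 < J" using kJ by (smt (verit) exp_gt_zero mult_nonneg_nonneg of_nat_0_le_iff of_nat_0_less_iff)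
  define N where "N = 2 * J"
  have N0: "0 < N" using J0 unfolding N_def by simp
  have "4 * real k \<le> 2 * exp 1 * real k" using e2 by (intro mult_right_mono) auto
  then have "4 * real k \<le> real J" using kJ by linarith
  then have N4: "4 * k \<le> N" unfolding N_def by linarith
  define \<omega> where "\<omega> = exp (2 * of_real pi * \<i> / of_nat N :: complex)"
  define c where "c = complex_of_real (fact k / (real k ^ k * real N))"
  define xs where "xs = map (\<lambda>j. (c * \<omega> ^ (j * (N - k)), of_nat k * \<omega> ^ j)) [0..<N]"
  have nw: "norm \<omega> = 1" unfolding \<omega>_def by (simp add: norm_exp_eq_Re)
  have kk: "0 < real k ^ k" by (cases k) auto
  have nc: "norm c \<le> 1"
  proof -
    have fk: "fact k \<le> real k ^ k" using fact_le_power[where 'a=real and n=k] by simp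
    have "real k ^ k \<le> real k ^ k * real N" using kk N0 by simp
    then have "fact k \<le> real k ^ k * real N" using fk by linarith
    moreover have "0 < real k ^ k * real N" using kk N0 by simp
    ultimately have "fact k / (real k ^ k * real N) \<le> 1" by (simp add: pos_divide_le_eq)
    moreover have "0 \<le> fact k / (real k ^ k * real N)" using kk by simp
    ultimately show ?thesis unfolding c_def norm_of_real by linarith
  qed
  have sumeq: "(\<Sum>(a, w)\<leftarrow>xs. a * exp (w * \<xi>))
      = (\<Sum>j<N. c * \<omega> ^ (j * (N - k)) * exp (of_nat k * \<omega> ^ j * \<xi>))" for \<xi>
    unfolding xs_def by (simp add: o_def sum_set_upt_conv_sum_list_nat[symmetric] atLeast0LessThan)
  show ?thesis
  proof (intro exI conjI allI impI)
    show "length xs = 2 * J" unfolding xs_def N_def by simp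
    show "\<forall>(a, w) \<in> set xs. norm a \<le> 1 \<and> norm w \<le> real k"
      unfolding xs_def using nc nw by (auto simp: norm_mult norm_power)
    fix \<xi> :: complex assume xi: "norm \<xi> \<le> 2"
    have "norm ((\<Sum>(a, w)\<leftarrow>xs. a * exp (w * \<xi>)) - \<xi> ^ k) \<le> 2 * ((2 * real k) ^ N / fact N)"
      unfolding sumeq \<omega>_def c_def by (rule core[OF N4 N0 xi])
    also have "\<dots> \<le> 2 * (2 * exp 1 * real k / real J) ^ J"
      using T_bound[OF kJ] unfolding N_def by simp
    finally show "norm ((\<Sum>(a, w)\<leftarrow>xs. a * exp (w * \<xi>)) - \<xi> ^ k) \<le> 2 * (2 * exp 1 * real k / real J) ^ J" .
  qed
qed

lemma length_concat_const:
  assumes "\<And>x. length (f x) = m"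
  shows "length (concat (map f xs)) = m * length xs"
  using assms by (induction xs) auto

theorem lemma2:
  "\<exists>C::real. C > 0 \<and>
     (\<forall>\<sigma> \<in> {exp, sinh, sin :: complex \<Rightarrow> complex}. \<forall>k J :: nat.
        2 * exp 1 * real k < real J \<longrightarrow>
        (\<exists>ps :: (complex \<times> complex \<times> complex) list.
            real (length ps) \<le> C * real J \<and>
            (\<forall>(a, w, b) \<in> set ps. norm a \<le> C * (real k + 1) \<and> norm w \<le> C * (real k + 1)
                                   \<and> norm b \<le> C * (real k + 1)) \<and>
            (\<forall>\<xi>::complex. norm \<xi> \<le> 2 \<longrightarrow>
               norm (shallow_nn \<sigma> ps \<xi> - \<xi> ^ k) \<le> 2 * (2 * exp 1 * real k / real J) ^ J)))"
proof (intro exI[of _ 4] conjI ballI allI impI)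
  show "(0::real) < 4" by simp
  fix \<sigma> :: "complex \<Rightarrow> complex" and k J :: nat
  assume s: "\<sigma> \<in> {exp, sinh, sin}" and kJ: "2 * exp 1 * real k < real J"
  obtain xs where len: "length xs = 2 * J"
    and nb: "\<forall>(a, w) \<in> set xs. norm a \<le> 1 \<and> norm w \<le> real k"
    and err: "\<forall>\<xi>::complex. norm \<xi> \<le> 2 \<longrightarrow>
              norm ((\<Sum>(a, w)\<leftarrow>xs. a * exp (w * \<xi>)) - \<xi> ^ k) \<le> 2 * (2 * exp 1 * real k / real J) ^ J"
    using approx[OF kJ] by blast
  have pi2: "pi / 2 \<le> 4 * (real k + 1)" 
  proof -
    have "pi / 2 \<le> 2" using pi_less_4 by simp
    moreover have "(2::real) \<le> 4 * (real k + 1)" by simp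
    ultimately show ?thesis by (rule order_trans)
  qed
  have pin: "norm (\<i> * complex_of_real pi / 2) = pi / 2" "norm (complex_of_real pi / 2) = pi / 2"
    by (simp_all add: norm_mult norm_divide)
  have one: "1 \<le> 4 * (real k + 1)" by simp
  have kb: "real k \<le> 4 * (real k + 1)" by simp
  consider "\<sigma> = exp" | "\<sigma> = sinh" | "\<sigma> = sin" using s by auto
  then show "\<exists>ps :: (complex \<times> complex \<times> complex) list.
            real (length ps) \<le> 4 * real J \<and>
            (\<forall>(a, w, b) \<in> set ps. norm a \<le> 4 * (real k + 1) \<and> norm w \<le> 4 * (real k + 1)
                                   \<and> norm b \<le> 4 * (real k + 1)) \<and>
            (\<forall>\<xi>::complex. norm \<xi> \<le> 2 \<longrightarrow>
               norm (shallow_nn \<sigma> ps \<xi> - \<xi> ^ k) \<le> 2 * (2 * exp 1 * real k / real J) ^ J)"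
  proof cases
    case 1
    define f :: "complex \<times> complex \<Rightarrow> (complex \<times> complex \<times> complex) list"
      where "f = (\<lambda>(a, w). [(a, w, 0)])"
    show ?thesis
    proof (intro exI[of _ "concat (map f xs)"] conjI)
      have "length (concat (map f xs)) = 1 * length xs"
        by (rule length_concat_const) (simp add: f_def case_prod_unfold)
      then show "real (length (concat (map f xs))) \<le> 4 * real J" using len by simp
      show "\<forall>(a, w, b) \<in> set (concat (map f xs)). norm a \<le> 4 * (real k + 1) \<and> norm w \<le> 4 * (real k + 1)
                                   \<and> norm b \<le> 4 * (real k + 1)"
        using nb one kb unfolding f_def by fastforce
      show "\<forall>\<xi>::complex. norm \<xi> \<le> 2 \<longrightarrow>
               norm (shallow_nn \<sigma> (concat (map f xs)) \<xi> - \<xi> ^ k) \<le> 2 * (2 * exp 1 * real k / real J) ^ J"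
        using err unfolding 1 f_def nn_exp by simp
    qed
  next
    case 2
    define f :: "complex \<times> complex \<Rightarrow> (complex \<times> complex \<times> complex) list"
      where "f = (\<lambda>(a, w). [(a, w, 0), (- \<i> * a, w, \<i> * of_real pi / 2)])"
    show ?thesis
    proof (intro exI[of _ "concat (map f xs)"] conjI)
      have "length (concat (map f xs)) = 2 * length xs"
        by (rule length_concat_const) (simp add: f_def case_prod_unfold)
      then show "real (length (concat (map f xs))) \<le> 4 * real J" using len by simp
      show "\<forall>(a, w, b) \<in> set (concat (map f xs)). norm a \<le> 4 * (real k + 1) \<and> norm w \<le> 4 * (real k + 1)
                                   \<and> norm b \<le> 4 * (real k + 1)"
      proof (intro ballI, clarify)
        fix a w b assume "(a, w, b) \<in> set (concat (map f xs))"
        then obtain a0 w0 where m: "(a0, w0) \<in> set xs" and ab: "(a, w, b) \<in> set (f (a0, w0))"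
          by auto
        from m nb have a0: "norm a0 \<le> 1" and w0: "norm w0 \<le> real k" by auto
        from ab have ha: "a = a0 \<or> a = - \<i> * a0" and hw: "w = w0"
          and hb: "b = 0 \<or> b = \<i> * of_real pi / 2" unfolding f_def by auto
        have na: "norm a \<le> 1" using ha a0 by (auto simp: norm_mult)
        have nw: "norm w \<le> real k" using hw w0 by (simp add: norm_mult)
        have nb2: "norm b \<le> pi / 2"
        proof -
          from hb consider "b = 0" | "b = \<i> * of_real pi / 2" by blast
          then show ?thesis
          proof cases
            case 1 then show ?thesis using pi_gt_zero by simp
          next
            case 2 then show ?thesis using pin by (metis order_refl)
          qed
        qed
        show "norm a \<le> 4 * (real k + 1) \<and> norm w \<le> 4 * (real k + 1) \<and> norm b \<le> 4 * (real k + 1)"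
          using na nw nb2 one kb pi2 by linarith
      qed
      show "\<forall>\<xi>::complex. norm \<xi> \<le> 2 \<longrightarrow>
               norm (shallow_nn \<sigma> (concat (map f xs)) \<xi> - \<xi> ^ k) \<le> 2 * (2 * exp 1 * real k / real J) ^ J"
        using err unfolding 2 f_def nn_sinh by simp
    qed
  next
    case 3
    define f :: "complex \<times> complex \<Rightarrow> (complex \<times> complex \<times> complex) list"
      where "f = (\<lambda>(a, w). [(a, - \<i> * w, of_real pi / 2), (\<i> * a, - \<i> * w, 0)])"
    show ?thesis
    proof (intro exI[of _ "concat (map f xs)"] conjI)
      have "length (concat (map f xs)) = 2 * length xs"
        by (rule length_concat_const) (simp add: f_def case_prod_unfold)
      then show "real (length (concat (map f xs))) \<le> 4 * real J" using len by simp
      show "\<forall>(a, w, b) \<in> set (concat (map f xs)). norm a \<le> 4 * (real k + 1) \<and> norm w \<le> 4 * (real k + 1)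
                                   \<and> norm b \<le> 4 * (real k + 1)"
      proof (intro ballI, clarify)
        fix a w b assume "(a, w, b) \<in> set (concat (map f xs))"
        then obtain a0 w0 where m: "(a0, w0) \<in> set xs" and ab: "(a, w, b) \<in> set (f (a0, w0))"
          by auto
        from m nb have a0: "norm a0 \<le> 1" and w0: "norm w0 \<le> real k" by auto
        from ab have ha: "a = a0 \<or> a = \<i> * a0" and hw: "w = - \<i> * w0"
          and hb: "b = 0 \<or> b = of_real pi / 2" unfolding f_def by auto
        have na: "norm a \<le> 1" using ha a0 by (auto simp: norm_mult)
        have nw: "norm w \<le> real k" using hw w0 by (simp add: norm_mult)
        have nb2: "norm b \<le> pi / 2"
        proof -
          from hb consider "b = 0" | "b = of_real pi / 2" by blast
          then show ?thesis
          proof cases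
            case 1 then show ?thesis using pi_gt_zero by simp
          next
            case 2 then show ?thesis using pin by (metis order_refl)
          qed
        qed
        show "norm a \<le> 4 * (real k + 1) \<and> norm w \<le> 4 * (real k + 1) \<and> norm b \<le> 4 * (real k + 1)"
          using na nw nb2 one kb pi2 by linarith
      qed
      show "\<forall>\<xi>::complex. norm \<xi> \<le> 2 \<longrightarrow>
               norm (shallow_nn \<sigma> (concat (map f xs)) \<xi> - \<xi> ^ k) \<le> 2 * (2 * exp 1 * real k / real J) ^ J"
        using err unfolding 3 f_def nn_sin by simp
    qed
  qed
qed

end
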